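(* Let $0<|p|<1$ and let $t_0,t_1,t_2,t_3,u_0,u_1,q$ be generic parameters with $t_0t_1t_2t_3u_0u_1=pq$, and $n\in\mathbb{Z}_{\geq0}$. Then: (1) as a function of $z$, $\tilde R_{n}(z;t_0:t_1,t_2,t_3;u_0,u_1;q;p)\in A(u_0;p,q)$; (2) $\tilde R_n$ is invariant under replacing $t_r\mapsto t_rp^{k_r}$ $(0\le r\le3)$ and $u_r\mapsto u_rp^{l_r}$ $(r=0,1)$ for integers $k_r,l_r$ with $\sum_r k_r+\sum_r l_r=0$; (3) $\tilde R_{n} (zp^{1/2} ;t_0p^{1/2}:t_1p^{-1/2},t_2p^{-1/2},t_3p^{-1/2};u_0p^{1/2},u_1p^{1/2};q;p) = \tilde R_{n} (z ;t_0:t_1,t_2,t_3;u_0,u_1;q;p)$; (4) $\tilde R_{n} (z; 1/t_0: 1/t_1,1/t_2,1/t_3;p/u_0,p/u_1;1/q;p) = \tilde R_{n} (z; t_0 : t_1,t_2,t_3;u_0,u_1;q;p)$.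
   Context: Notation: $\theta(x;p)=\prod_{r\ge0}(1-xp^r)(1-p^{r+1}/x)$ and $\theta(x;q;p)_k=\prod_{j=0}^{k-1}\theta(xq^j;p)$. These are written multiplicatively: several arguments separated by commas mean the product of the function over these arguments, and $x^{\pm1}$ inside an argument means the product over both signs, e.g. $\theta(a,bz^{\pm1};q;p)_k=\theta(a;q;p)_k\theta(bz;q;p)_k\theta(b/z;q;p)_k$. Define \[ \tilde R_{n}(z;t_0:t_1,t_2,t_3;u_0,u_1;q;p) = \sum_{k=0}^n \frac{\theta(\frac{qt_0}{u_0};q;p)_{2k}}{\theta(\frac{t_0}{u_0};q;p)_{2k}} \frac{\theta(\frac{t_0}{u_0}, \frac{pq^n}{u_0u_1},q^{-n}, t_0z^{\pm 1}, \frac{q}{u_0t_1}, \frac{q}{u_0t_2}, \frac{q}{u_0t_3};q;p)_k}{\theta(q,\frac{q^{1-n}t_0u_1}{p},\frac{q^{n+1}t_0}{u_0}, \frac{q}{u_0}z^{\pm 1}, t_0t_1,t_0t_2,t_0t_3;q;p)_k} q^{k}. \] A function $f:\mathbb{C}^*\to\mathbb{C}$ is symmetric if $f(z)=f(1/z)$ and $p$-abelian if $f(pz)=f(z)$. $A(u_0;p,q)$ is the space of meromorphic symmetric $p$-abelian functions $f$ such that $\theta(pq z^{\pm 1}/u_0;q;p)_{m} f(z)$ is holomorphic on $\mathbb{C}^*$ for some sufficiently large integer $m$ (depending on $f$); i.e. $f$ has at most simple poles, located only at $u_0q^{-l}p^k$ and $u_0^{-1}q^lp^k$ with $k\in\mathbb{Z}$,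 $1\le l\le m$. *)

theory Defs
  imports "HOL-Complex_Analysis.Complex_Analysis"
begin

definition theta :: "complex \<Rightarrow> complex \<Rightarrow> complex" where
  "theta x p = (\<Prod>r. (1 - x * p ^ r) * (1 - p ^ (r + 1) / x))"

definition ethq :: "complex \<Rightarrow> complex \<Rightarrow> complex \<Rightarrow> nat \<Rightarrow> complex" where
  "ethq x q p k = (\<Prod>j<k. theta (x * q ^ j) p)"

definition Rt :: "nat \<Rightarrow> complex \<Rightarrow> complex \<Rightarrow> complex \<Rightarrow> complex \<Rightarrow> complex
                   \<Rightarrow> complex \<Rightarrow> complex \<Rightarrow> complex \<Rightarrow> complex \<Rightarrow> complex" where
  "Rt n z t0 t1 t2 t3 u0 u1 q p =
     (\<Sum>k=0..n.
        ethq (q * t0 / u0) q p (2 * k) / ethq (t0 / u0) q p (2 * k) *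
        ((ethq (t0 / u0) q p k * ethq (p * q ^ n / (u0 * u1)) q p k * ethq (q powi (- int n)) q p k
          * ethq (t0 * z) q p k * ethq (t0 / z) q p k
          * ethq (q / (u0 * t1)) q p k * ethq (q / (u0 * t2)) q p k * ethq (q / (u0 * t3)) q p k)
        / (ethq q q p k * ethq (q powi (1 - int n) * t0 * u1 / p) q p k
          * ethq (q ^ (n + 1) * t0 / u0) q p k
          * ethq (q / u0 * z) q p k * ethq (q / u0 / z) q p k
          * ethq (t0 * t1) q p k * ethq (t0 * t2) q p k * ethq (t0 * t3) q p k))
        * q ^ k)"

text \<open>Genericity of the parameters: all nonzero and all z-independent denominators
  occurring in tilde R_n are nonzero (for every k <= n, implied by k = n).\<close>
definition generic_params :: "nat \<Rightarrow> complex \<Rightarrow> complex \<Rightarrow> complex \<Rightarrow> complex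
                   \<Rightarrow> complex \<Rightarrow> complex \<Rightarrow> complex \<Rightarrow> complex \<Rightarrow> bool" where
  "generic_params n t0 t1 t2 t3 u0 u1 q p \<longleftrightarrow>
     t0 \<noteq> 0 \<and> t1 \<noteq> 0 \<and> t2 \<noteq> 0 \<and> t3 \<noteq> 0 \<and> u0 \<noteq> 0 \<and> u1 \<noteq> 0 \<and> q \<noteq> 0 \<and>
     ethq (t0 / u0) q p (2 * n) \<noteq> 0 \<and>
     ethq q q p n * ethq (q powi (1 - int n) * t0 * u1 / p) q p n
       * ethq (q ^ (n + 1) * t0 / u0) q p n
       * ethq (t0 * t1) q p n * ethq (t0 * t2) q p n * ethq (t0 * t3) q p n \<noteq> 0"

definition regular_pt :: "nat \<Rightarrow> complex \<Rightarrow> complex \<Rightarrow> complex \<Rightarrow> complex \<Rightarrow> bool" where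
  "regular_pt n z u0 q p \<longleftrightarrow> z \<noteq> 0 \<and> ethq (q / u0 * z) q p n * ethq (q / u0 / z) q p n \<noteq> 0"

text \<open>Since f is a
  total function, the holomorphy condition is expressed by a holomorphic g on C^*
  agreeing with theta(pq z^{+-1}/u0;q;p)_m f(z) away from the (discrete) zeros of that
  theta product.\<close>
definition A_space :: "complex \<Rightarrow> complex \<Rightarrow> complex \<Rightarrow> (complex \<Rightarrow> complex) \<Rightarrow> bool" where
  "A_space u0 p q f \<longleftrightarrow>
     f meromorphic_on (- {0}) \<and>
     (\<forall>z. z \<noteq> 0 \<longrightarrow> f z = f (1 / z)) \<and>
     (\<forall>z. z \<noteq> 0 \<longrightarrow> f (p * z) = f z) \<and>
     (\<exists>m::nat. \<exists>g. g holomorphic_on (- {0}) \<and>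
        (\<forall>z. z \<noteq> 0 \<longrightarrow>
           ethq (p * q * z / u0) q p m * ethq (p * q / (z * u0)) q p m \<noteq> 0 \<longrightarrow>
           g z = ethq (p * q * z / u0) q p m * ethq (p * q / (z * u0)) q p m * f z))"

end

theory Submission
  imports Defs
begin

lemma theta_factor_eq:
  fixes x p :: complex assumes "x \<noteq> 0"
  shows "(1 - x*p^r)*(1 - p^(r+1)/x) - 1 = -(x*p^r) - p^(r+1)/x + p^r*p^r*p"
  using assms by (simp add: field_simps)

lemma theta_factor_bound:
  fixes x p :: complex assumes "norm p < 1" "x \<noteq> 0"
  shows "norm ((1 - x*p^r)*(1 - p^(r+1)/x) - 1) \<le> (norm x + 1/norm x + 1) * norm p ^ r"
proof -
  have np1: "norm p ^ (r+1) \<le> norm p ^ r"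
    by (rule power_decreasing) (use assms in auto)
  have np2: "norm p ^ r * norm p ^ r * norm p \<le> norm p ^ r"
  proof -
    have "norm p ^ r * norm p \<le> 1" using assms(1) by (intro mult_le_one power_le_one) auto
    hence "norm p ^ r * (norm p ^ r * norm p) \<le> norm p ^ r" by (rule mult_left_le) auto
    thus ?thesis by (simp add: mult.assoc)
  qed
  note np = np1 np2
  have "norm ((1 - x*p^r)*(1 - p^(r+1)/x) - 1) = norm (-(x*p^r) - p^(r+1)/x + p^r*p^r*p)"
    using theta_factor_eq[OF assms(2)] by simp
  also have "\<dots> \<le> norm (x*p^r) + norm (p^(r+1)/x) + norm (p^r*p^r*p)"
  proof -
    have "norm (-(x*p^r) - p^(r+1)/x + p^r*p^r*p) \<le> norm (-(x*p^r) - p^(r+1)/x) + norm (p^r*p^r*p)"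
      by (rule norm_triangle_ineq)
    also have "norm (-(x*p^r) - p^(r+1)/x) \<le> norm (-(x*p^r)) + norm (p^(r+1)/x)"
      by (rule norm_triangle_ineq4)
    finally show ?thesis by simp
  qed
  also have "\<dots> = norm x * norm p ^ r + norm p ^(r+1) / norm x + norm p ^ r * norm p ^ r * norm p"
    by (simp add: norm_mult norm_divide norm_power)
  also have "\<dots> \<le> norm x * norm p ^ r + norm p ^ r / norm x + norm p ^ r"
    using np assms by (intro add_mono divide_right_mono) auto
  also have "\<dots> = (norm x + 1/norm x + 1) * norm p ^ r"
    by (simp add: field_simps)
  finally show ?thesis .
qed

lemma theta_convergent:
  fixes x p :: complex assumes "norm p < 1" "x \<noteq> 0"
  shows "convergent_prod (\<lambda>r. (1 - x*p^r)*(1 - p^(r+1)/x))"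
proof -
  have "summable (\<lambda>r. norm ((1 - x*p^r)*(1 - p^(r+1)/x) - 1))"
  proof (rule summable_comparison_test')
    show "summable (\<lambda>r. (norm x + 1/norm x + 1) * norm p ^ r)"
      using assms(1) by (intro summable_mult summable_geometric) auto
  qed (use theta_factor_bound[OF assms] in auto)
  thus ?thesis
    by (intro abs_convergent_prod_imp_convergent_prod) (simp add: abs_convergent_prod_conv_summable)
qed

lemma theta_LIMSEQ:
  fixes x p :: complex assumes "norm p < 1" "x \<noteq> 0"
  shows "(\<lambda>N. \<Prod>r<N. (1 - x*p^r)*(1 - p^(r+1)/x)) \<longlonglongrightarrow> theta x p"
proof -
  have "(\<lambda>N. \<Prod>r\<le>N. (1 - x*p^r)*(1 - p^(r+1)/x)) \<longlonglongrightarrow> theta x p"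
    unfolding theta_def by (rule convergent_prod_LIMSEQ[OF theta_convergent[OF assms]])
  hence "(\<lambda>N. \<Prod>r<Suc N. (1 - x*p^r)*(1 - p^(r+1)/x)) \<longlonglongrightarrow> theta x p"
    by (simp add: lessThan_Suc_atMost)
  thus ?thesis by (rule LIMSEQ_imp_Suc)
qed

lemma theta_zero_iff:
  fixes x p :: complex assumes "norm p < 1" "x \<noteq> 0"
  shows "theta x p = 0 \<longleftrightarrow> (\<exists>r. (1 - x*p^r)*(1 - p^(r+1)/x) = 0)"
proof -
  have "theta x p = 0 \<longleftrightarrow> 0 \<in> range (\<lambda>r. (1 - x*p^r)*(1 - p^(r+1)/x))"
    using has_prod_eq_0_iff[OF convergent_prod_has_prod[OF theta_convergent[OF assms]]]
    unfolding theta_def .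
  also have "\<dots> \<longleftrightarrow> (\<exists>r. (1 - x*p^r)*(1 - p^(r+1)/x) = 0)"
    by (metis (mono_tags, lifting) rangeE rangeI)
  finally show ?thesis .
qed

lemma theta_p_div:
  fixes x p :: complex assumes "p \<noteq> 0" "x \<noteq> 0"
  shows "theta (p / x) p = theta x p"
  unfolding theta_def
  by (rule arg_cong[where f=prodinf], rule ext) (use assms in \<open>simp add: field_simps\<close>)

lemma theta_mult_p:
  fixes x p :: complex assumes "norm p < 1" "p \<noteq> 0" "x \<noteq> 0"
  shows "theta (p * x) p = - theta x p / x"
proof (cases "x = 1")
  case True
  have "theta 1 p = 0" "theta p p = 0"
  proof -
    have z1: "(1 - 1*p^0)*(1 - p^(0+1)/1) = 0" and z2: "(1 - p*p^0)*(1 - p^(0+1)/p) = 0"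
      using assms by simp_all
    show "theta 1 p = 0" using theta_zero_iff[of p 1] assms z1 one_neq_zero by metis
    show "theta p p = 0" using theta_zero_iff[of p p] assms z2 by metis
  qed
  thus ?thesis using True by simp
next
  case False
  define a where "a r = 1 - x * p^r" for r
  define b where "b r = 1 - p^r / x" for r
  have px: "p * x \<noteq> 0" using assms by simp
  have key: "(\<Prod>r<N. (1 - (p*x)*p^r)*(1 - p^(r+1)/(p*x))) * (a 0 * b N) =
             (\<Prod>r<N. (1 - x*p^r)*(1 - p^(r+1)/x)) * (a N * b 0)" for N
  proof (induction N)
    case 0 then show ?case by simp
  next
    case (Suc N)
    have e1: "(1 - (p*x)*p^N)*(1 - p^(N+1)/(p*x)) = a (Suc N) * b N"
      using assms by (simp add: a_def b_def field_simps)
    have e2: "(1 - x*p^N)*(1 - p^(N+1)/x) = a N * b (Suc N)"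
      by (simp add: a_def b_def)
    have "(\<Prod>r<Suc N. (1 - (p*x)*p^r)*(1 - p^(r+1)/(p*x))) * (a 0 * b (Suc N))
        = ((\<Prod>r<N. (1 - (p*x)*p^r)*(1 - p^(r+1)/(p*x))) * (a 0 * b N)) * (a (Suc N) * b (Suc N))"
      unfolding prod.lessThan_Suc e1 by (simp add: ac_simps)
    also have "\<dots> = ((\<Prod>r<N. (1 - x*p^r)*(1 - p^(r+1)/x)) * (a N * b 0)) * (a (Suc N) * b (Suc N))"
      using Suc by simp
    also have "\<dots> = (\<Prod>r<Suc N. (1 - x*p^r)*(1 - p^(r+1)/x)) * (a (Suc N) * b 0)"
      unfolding prod.lessThan_Suc e2 by (simp add: ac_simps)
    finally show ?case .
  qed
  have pn: "(\<lambda>N. p ^ N) \<longlonglongrightarrow> 0" using assms(1) by (rule LIMSEQ_power_zero)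
  have aN: "a \<longlonglongrightarrow> 1" unfolding a_def
    using tendsto_diff[OF tendsto_const tendsto_mult[OF tendsto_const pn, of x]] by simp
  have bN: "b \<longlonglongrightarrow> 1" unfolding b_def
    using tendsto_diff[OF tendsto_const tendsto_divide[OF pn tendsto_const, of x]] assms by simp
  have "(\<lambda>N. (\<Prod>r<N. (1 - (p*x)*p^r)*(1 - p^(r+1)/(p*x))) * (a 0 * b N)) \<longlonglongrightarrow> theta (p*x) p * (a 0 * 1)"
    by (intro tendsto_intros theta_LIMSEQ assms px bN)
  moreover have "(\<lambda>N. (\<Prod>r<N. (1 - x*p^r)*(1 - p^(r+1)/x)) * (a N * b 0)) \<longlonglongrightarrow> theta x p * (1 * b 0)"
    by (intro tendsto_intros theta_LIMSEQ assms aN)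
  ultimately have "theta (p*x) p * a 0 = theta x p * b 0"
    using key LIMSEQ_unique by fastforce
  moreover have "a 0 \<noteq> 0" "b 0 = - a 0 / x" using False assms
    by (auto simp: a_def b_def field_simps)
  ultimately have "a 0 * theta (p*x) p = a 0 * (- theta x p / x)" by (simp add: mult.commute)
  thus ?thesis using \<open>a 0 \<noteq> 0\<close> by (rule mult_left_cancel[THEN iffD1, rotated])
qed



lemma theta_holomorphic:
  fixes p :: complex assumes p: "norm p < 1"
  shows "(\<lambda>x. theta x p) holomorphic_on (- {0})"
proof (rule holomorphic_uniform_sequence[where f = "\<lambda>N x. \<Prod>r<N. (1 - x*p^r)*(1 - p^(r+1)/x)"])
  show "open (- {0::complex})" by auto
  show "(\<lambda>x. \<Prod>r<N. (1 - x*p^r)*(1 - p^(r+1)/x)) holomorphic_on - {0}" for N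
    by (intro holomorphic_intros) auto
next
  fix z0 :: complex assume "z0 \<in> - {0}"
  hence z0: "z0 \<noteq> 0" by auto
  define d where "d = norm z0 / 2"
  have d: "d > 0" using z0 by (simp add: d_def)
  have sub: "cball z0 d \<subseteq> - {0}"
    using z0 by (auto simp: d_def dist_norm)
  have bnd: "norm x \<le> 3 * norm z0 / 2" "1 / norm x \<le> 2 / norm z0" "x \<noteq> 0" if "x \<in> cball z0 d" for x
  proof -
    have "norm (z0 - x) \<le> norm z0 / 2" using that by (simp add: d_def dist_norm)
    moreover have "norm x \<le> norm z0 + norm (z0 - x)" "norm z0 \<le> norm x + norm (z0 - x)"
      using norm_triangle_ineq4[of z0 "z0 - x"] norm_triangle_ineq[of x "z0 - x"] by auto
    ultimately have h1: "norm x \<le> 3 * norm z0 / 2" and h2: "norm z0 / 2 \<le> norm x" by auto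
    show "norm x \<le> 3 * norm z0 / 2" by (fact h1)
    have "norm z0 > 0" using z0 by simp
    hence nx: "norm x > 0" using h2 by linarith
    show "x \<noteq> 0" using nx zero_less_norm_iff by blast
    show "1 / norm x \<le> 2 / norm z0" using h2 nx z0
      by (simp add: field_simps)
  qed
  define M where "M r = (3 * norm z0 / 2 + 2 / norm z0 + 1) * norm p ^ r" for r
  have "uniformly_convergent_on (cball z0 d) (\<lambda>N x. \<Prod>r<N. (1 - x*p^r)*(1 - p^(r+1)/x))"
  proof (rule uniformly_convergent_on_prod')
    show "continuous_on (cball z0 d) (\<lambda>x. (1 - x*p^r)*(1 - p^(r+1)/x))" for r
      using bnd(3) by (intro continuous_intros) auto
    show "compact (cball z0 d)" by simp
    show "uniformly_convergent_on (cball z0 d) (\<lambda>N x. \<Sum>r<N. norm ((1 - x*p^r)*(1 - p^(r+1)/x) - 1))"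
    proof (rule Weierstrass_m_test')
      show "summable M" unfolding M_def using p by (intro summable_mult summable_geometric) auto
      fix r x assume x: "x \<in> cball z0 d"
      have "norm (norm ((1 - x*p^r)*(1 - p^(r+1)/x) - 1)) \<le> (norm x + 1/norm x + 1) * norm p ^ r"
        using theta_factor_bound[OF p bnd(3)[OF x]] by simp
      also have "\<dots> \<le> M r" unfolding M_def
      proof (rule mult_right_mono)
        show "norm x + 1/norm x + 1 \<le> 3 * norm z0 / 2 + 2 / norm z0 + 1"
          using bnd(1,2)[OF x] by linarith
      qed simp
      finally show "norm (norm ((1 - x*p^r)*(1 - p^(r+1)/x) - 1)) \<le> M r" .
    qed
  qed
  then obtain g where g: "uniform_limit (cball z0 d) (\<lambda>N x. \<Prod>r<N. (1 - x*p^r)*(1 - p^(r+1)/x)) g sequentially"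
    by (auto simp: uniformly_convergent_on_def)
  have "uniform_limit (cball z0 d) (\<lambda>N x. \<Prod>r<N. (1 - x*p^r)*(1 - p^(r+1)/x)) (\<lambda>x. theta x p) sequentially"
  proof (rule uniform_limit_cong[THEN iffD1, OF _ _ g])
    fix x assume x: "x \<in> cball z0 d"
    have "(\<lambda>N. \<Prod>r<N. (1 - x*p^r)*(1 - p^(r+1)/x)) \<longlonglongrightarrow> g x"
      using tendsto_uniform_limitI[OF g x] .
    moreover have "(\<lambda>N. \<Prod>r<N. (1 - x*p^r)*(1 - p^(r+1)/x)) \<longlonglongrightarrow> theta x p"
      using theta_LIMSEQ[OF p bnd(3)[OF x]] .
    ultimately show "g x = theta x p" by (rule LIMSEQ_unique)
  qed auto
  thus "\<exists>d>0. cball z0 d \<subseteq> - {0} \<and> uniform_limit (cball z0 d) (\<lambda>N x. \<Prod>r<N. (1 - x*p^r)*(1 - p^(r+1)/x)) (\<lambda>x. theta x p) sequentially"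
    using d sub by blast
qed

lemma theta_analytic:
  fixes p :: complex assumes p: "norm p < 1"
  shows "(\<lambda>x. theta x p) analytic_on (- {0})"
  using theta_holomorphic[OF p] by (simp add: analytic_on_open open_Compl)



definition Qp :: "complex \<Rightarrow> nat \<Rightarrow> complex" where "Qp q k = (\<Prod>j<k. q^j)"

lemma Qp_nz: "q \<noteq> 0 \<Longrightarrow> Qp q k \<noteq> 0" unfolding Qp_def by simp

locale thp =
  fixes p :: complex assumes p1: "norm p < 1" and p0: "p \<noteq> 0"
begin

lemma th_mult: "w \<noteq> 0 \<Longrightarrow> theta (p * w) p = - theta w p / w"
  by (rule theta_mult_p[OF p1 p0])

lemma th_pdiv: "w \<noteq> 0 \<Longrightarrow> theta (p / w) p = theta w p"
  by (rule theta_p_div[OF p0])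

lemma th_divp: assumes "w \<noteq> 0" shows "theta (w / p) p = - (w / p) * theta w p"
proof -
  have "theta (p * (w/p)) p = - theta (w/p) p / (w/p)" using assms p0 by (intro th_mult) simp
  hence "theta w p = - theta (w/p) p / (w/p)" using p0 by simp
  thus ?thesis using assms p0 by (simp add: field_simps)
qed

lemma th_inv: assumes "w \<noteq> 0" shows "theta (1 / w) p = - theta w p / w"
proof -
  have "theta (p / (p * w)) p = theta (p * w) p" using assms p0 by (intro th_pdiv) simp
  thus ?thesis using assms p0 th_mult[OF assms] by simp
qed

lemma th_invp: assumes "w \<noteq> 0" shows "theta (1 / (p * w)) p = theta w p / (p * w^2)"
proof -
  have "theta (p / (p * (p * w))) p = theta (p * (p * w)) p" using assms p0 by (intro th_pdiv) simp
  hence "theta (1 / (p * w)) p = theta (p * (p * w)) p" using p0 by simp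
  also have "\<dots> = - theta (p*w) p / (p * w)" using assms p0 by (intro th_mult) simp
  also have "\<dots> = theta w p / (p * w^2)" using th_mult[OF assms] assms p0
    by (simp add: field_simps power2_eq_square)
  finally show ?thesis .
qed

lemma prod_rel:
  assumes "\<And>j. j < k \<Longrightarrow> theta (\<phi> j) p = \<psi> j * theta (y * q^j) p"
  shows "(\<Prod>j<k. theta (\<phi> j) p) = (\<Prod>j<k. \<psi> j) * ethq y q p k"
proof -
  have "(\<Prod>j<k. theta (\<phi> j) p) = (\<Prod>j<k. \<psi> j * theta (y * q^j) p)"
    using assms by (intro prod.cong) auto
  also have "\<dots> = (\<Prod>j<k. \<psi> j) * ethq y q p k"
    by (simp add: ethq_def prod.distrib)
  finally show ?thesis .
qed

lemma ethq_multI: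
  assumes "x = p * y" "y \<noteq> 0" "q \<noteq> 0"
  shows "ethq x q p k = (\<Prod>j<k. -1 / (y * q^j)) * ethq y q p k"
proof -
  have "ethq x q p k = (\<Prod>j<k. theta (p * (y * q^j)) p)"
    by (simp add: ethq_def mult.assoc assms(1))
  also have "\<dots> = (\<Prod>j<k. -1 / (y * q^j)) * ethq y q p k"
    using assms by (intro prod_rel) (simp add: th_mult)
  finally show ?thesis .
qed

lemma ethq_divpI:
  assumes "x = y / p" "y \<noteq> 0" "q \<noteq> 0"
  shows "ethq x q p k = (\<Prod>j<k. -(y * q^j) / p) * ethq y q p k"
proof -
  have "ethq x q p k = (\<Prod>j<k. theta ((y * q^j) / p) p)"
    by (simp add: ethq_def assms(1))
  also have "\<dots> = (\<Prod>j<k. -(y * q^j) / p) * ethq y q p k"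
    using assms by (intro prod_rel) (simp add: th_divp)
  finally show ?thesis .
qed

lemma ethq_invI:
  assumes "x = 1 / y" "y \<noteq> 0" "q \<noteq> 0"
  shows "ethq x (1/q) p k = (\<Prod>j<k. -1 / (y * q^j)) * ethq y q p k"
proof -
  have "ethq x (1/q) p k = (\<Prod>j<k. theta (1 / (y * q^j)) p)"
    by (simp add: ethq_def assms(1) power_one_over)
  also have "\<dots> = (\<Prod>j<k. -1 / (y * q^j)) * ethq y q p k"
    using assms by (intro prod_rel) (simp add: th_inv)
  finally show ?thesis .
qed

lemma ethq_invpI:
  assumes "x = 1 / (p * y)" "y \<noteq> 0" "q \<noteq> 0"
  shows "ethq x (1/q) p k = (\<Prod>j<k. 1 / (p * (y * q^j)^2)) * ethq y q p k"
proof -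
  have "ethq x (1/q) p k = (\<Prod>j<k. theta (1 / (p * (y * q^j))) p)"
    by (simp add: ethq_def assms(1) power_one_over mult.assoc)
  also have "\<dots> = (\<Prod>j<k. 1 / (p * (y * q^j)^2)) * ethq y q p k"
    using assms by (intro prod_rel) (simp add: th_invp)
  finally show ?thesis .
qed

lemma ethq_sameI: "ethq x q p k = (\<Prod>j<k. 1) * ethq x q p k"
  by simp

end

lemma prod_2k: fixes f :: "nat \<Rightarrow> 'a::comm_monoid_mult" and k :: nat
  shows "(\<Prod>j<2*k. f j) = (\<Prod>j<k. f (2*j) * f (2*j+1))"
  by (induction k) (simp_all add: mult_ac)

definition Tm :: "nat \<Rightarrow> complex \<Rightarrow> complex \<Rightarrow> complex \<Rightarrow> complex \<Rightarrow> complex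
                   \<Rightarrow> complex \<Rightarrow> complex \<Rightarrow> complex \<Rightarrow> complex \<Rightarrow> nat \<Rightarrow> complex" where
  "Tm n z t0 t1 t2 t3 u0 u1 q p k =
        ethq (q * t0 / u0) q p (2 * k) / ethq (t0 / u0) q p (2 * k) *
        ((ethq (t0 / u0) q p k * ethq (p * q ^ n / (u0 * u1)) q p k * ethq (q powi (- int n)) q p k
          * ethq (t0 * z) q p k * ethq (t0 / z) q p k
          * ethq (q / (u0 * t1)) q p k * ethq (q / (u0 * t2)) q p k * ethq (q / (u0 * t3)) q p k)
        / (ethq q q p k * ethq (q powi (1 - int n) * t0 * u1 / p) q p k
          * ethq (q ^ (n + 1) * t0 / u0) q p k
          * ethq (q / u0 * z) q p k * ethq (q / u0 / z) q p k
          * ethq (t0 * t1) q p k * ethq (t0 * t2) q p k * ethq (t0 * t3) q p k))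
        * q ^ k"

lemma Rt_Tm: "Rt n z t0 t1 t2 t3 u0 u1 q p = (\<Sum>k=0..n. Tm n z t0 t1 t2 t3 u0 u1 q p k)"
  unfolding Rt_def Tm_def ..

lemma term_eq:
  fixes A A' a B B' b r r' :: complex
  assumes "A' = a * A" "B' = b * B"
    "N1' = c1 * N1" "N2' = c2 * N2" "N3' = c3 * N3" "N4' = c4 * N4"
    "N5' = c5 * N5" "N6' = c6 * N6" "N7' = c7 * N7" "N8' = c8 * N8"
    "D1' = d1 * D1" "D2' = d2 * D2" "D3' = d3 * D3" "D4' = d4 * D4"
    "D5' = d5 * D5" "D6' = d6 * D6" "D7' = d7 * D7" "D8' = d8 * D8"
    "a / b * ((c1*c2*c3*c4*c5*c6*c7*c8) / (d1*d2*d3*d4*d5*d6*d7*d8)) * r' = r"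
  shows "A' / B' * ((N1'*N2'*N3'*N4'*N5'*N6'*N7'*N8') / (D1'*D2'*D3'*D4'*D5'*D6'*D7'*D8')) * r'
       = A / B * ((N1*N2*N3*N4*N5*N6*N7*N8) / (D1*D2*D3*D4*D5*D6*D7*D8)) * r"
proof -
  have "A' / B' * ((N1'*N2'*N3'*N4'*N5'*N6'*N7'*N8') / (D1'*D2'*D3'*D4'*D5'*D6'*D7'*D8')) * r'
     = (a / b * ((c1*c2*c3*c4*c5*c6*c7*c8) / (d1*d2*d3*d4*d5*d6*d7*d8)) * r') *
       (A / B * ((N1*N2*N3*N4*N5*N6*N7*N8) / (D1*D2*D3*D4*D5*D6*D7*D8)))"
    unfolding assms(1-18) by (simp add: divide_inverse inverse_mult_distrib ac_simps)
  also have "\<dots> = A / B * ((N1*N2*N3*N4*N5*N6*N7*N8) / (D1*D2*D3*D4*D5*D6*D7*D8)) * r"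
    unfolding assms(19) by (simp add: ac_simps)
  finally show ?thesis .
qed



lemma scal: fixes F :: "nat \<Rightarrow> complex"
  assumes "\<And>j. F j * s = t" shows "(\<Prod>j<k. F j) * s^k = t^k"
proof -
  have "(\<Prod>j<k. F j) * s^k = (\<Prod>j<k. F j * s)" by (simp add: prod.distrib)
  also have "\<dots> = t^k" using assms by simp
  finally show ?thesis .
qed

lemma qpow_facts:
  fixes q :: complex assumes "q \<noteq> 0"
  shows "q^(2*x) = (q^x)^2" "q^(2*x+1) = (q^x)^2*q" "q powi (1 - int n) = q / q^n" "q^(n+1) = q^n*q"
    "q powi (- int n) = 1 / q^n"
proof -
  show "q^(2*x) = (q^x)^2" by (simp add: power_mult[symmetric] mult.commute)
  thus "q^(2*x+1) = (q^x)^2*q" by simp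
  show "q powi (1 - int n) = q / q^n" using assms by (simp add: power_int_diff)
  show "q^(n+1) = q^n*q" by simp
  show "q powi (- int n) = 1 / q^n" by (simp add: power_int_minus divide_inverse)
qed


lemma term_eq_swap:
  fixes A A' a B B' b r r' :: complex
  assumes "A' = a * A" "B' = b * B"
    "N1' = c1 * N1" "N2' = c2 * N2" "N3' = c3 * N3" "N4' = c4 * N5"
    "N5' = c5 * N4" "N6' = c6 * N6" "N7' = c7 * N7" "N8' = c8 * N8"
    "D1' = d1 * D1" "D2' = d2 * D2" "D3' = d3 * D3" "D4' = d4 * D5"
    "D5' = d5 * D4" "D6' = d6 * D6" "D7' = d7 * D7" "D8' = d8 * D8"
    "a / b * ((c1*c2*c3*c4*c5*c6*c7*c8) / (d1*d2*d3*d4*d5*d6*d7*d8)) * r' = r"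
  shows "A' / B' * ((N1'*N2'*N3'*N4'*N5'*N6'*N7'*N8') / (D1'*D2'*D3'*D4'*D5'*D6'*D7'*D8')) * r'
       = A / B * ((N1*N2*N3*N4*N5*N6*N7*N8) / (D1*D2*D3*D4*D5*D6*D7*D8)) * r"
proof -
  have "A' / B' * ((N1'*N2'*N3'*N4'*N5'*N6'*N7'*N8') / (D1'*D2'*D3'*D4'*D5'*D6'*D7'*D8')) * r'
     = (a / b * ((c1*c2*c3*c4*c5*c6*c7*c8) / (d1*d2*d3*d4*d5*d6*d7*d8)) * r') *
       (A / B * ((N1*N2*N3*N4*N5*N6*N7*N8) / (D1*D2*D3*D4*D5*D6*D7*D8)))"
    unfolding assms(1-18) by (simp add: divide_inverse inverse_mult_distrib ac_simps)
  also have "\<dots> = A / B * ((N1*N2*N3*N4*N5*N6*N7*N8) / (D1*D2*D3*D4*D5*D6*D7*D8)) * r"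
    unfolding assms(19) by (simp add: ac_simps)
  finally show ?thesis .
qed

context thp begin

lemma ethq_eqI: "x = y \<Longrightarrow> ethq x q p k = (\<Prod>j<k. 1) * ethq y q p k"
  by simp

lemma move_t0t1_Tm:
  assumes nz: "t0 \<noteq> 0" "t1 \<noteq> 0" "t2 \<noteq> 0" "t3 \<noteq> 0" "u0 \<noteq> 0" "u1 \<noteq> 0" "q \<noteq> 0" "z \<noteq> 0"
      and bal: "t0 * t1 * t2 * t3 * u0 * u1 = p * q"
  shows "Tm n z (t0*p) (t1/p) t2 t3 u0 u1 q p k = Tm n z t0 t1 t2 t3 u0 u1 q p k"
  unfolding Tm_def
  apply (rule term_eq)
  apply (rule ethq_multI; simp add: nz p0)
  apply (rule ethq_multI; simp add: nz p0)
  apply (rule ethq_multI; simp add: nz p0)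
  apply (rule ethq_sameI)
  apply (rule ethq_sameI)
  apply (rule ethq_multI; simp add: nz p0)
  apply (rule ethq_multI; simp add: nz p0)
  apply (rule ethq_multI; simp add: nz p0)
  apply (rule ethq_sameI)
  apply (rule ethq_sameI)
  apply (rule ethq_sameI)
  apply (rule ethq_multI; simp add: nz p0)
  apply (rule ethq_multI; simp add: nz p0)
  apply (rule ethq_sameI)
  apply (rule ethq_sameI)
  apply (rule ethq_eqI; simp add: nz p0)
  apply (rule ethq_multI; simp add: nz p0)
  apply (rule ethq_multI; simp add: nz p0)
  apply (simp only: prod_2k prod_dividef[symmetric] prod.distrib[symmetric])
  apply (rule scal)
  subgoal for x
    using nz p0 bal by (simp add: qpow_facts field_simps)
  done

lemma move_u1t1_Tm:
  assumes nz: "t0 \<noteq> 0" "t1 \<noteq> 0" "t2 \<noteq> 0" "t3 \<noteq> 0" "u0 \<noteq> 0" "u1 \<noteq> 0" "q \<noteq> 0" "z \<noteq> 0"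
      and bal: "t0 * t1 * t2 * t3 * u0 * u1 = p * q"
  shows "Tm n z t0 (t1/p) t2 t3 u0 (u1*p) q p k = Tm n z t0 t1 t2 t3 u0 u1 q p k"
  unfolding Tm_def
  apply (rule term_eq)
  apply (rule ethq_sameI)
  apply (rule ethq_sameI)
  apply (rule ethq_sameI)
  apply (rule ethq_divpI; simp add: nz p0)
  apply (rule ethq_sameI)
  apply (rule ethq_sameI)
  apply (rule ethq_sameI)
  apply (rule ethq_multI; simp add: nz p0)
  apply (rule ethq_sameI)
  apply (rule ethq_sameI)
  apply (rule ethq_sameI)
  apply (rule ethq_multI; simp add: nz p0)
  apply (rule ethq_sameI)
  apply (rule ethq_sameI)
  apply (rule ethq_sameI)
  apply (rule ethq_divpI; simp add: nz p0)
  apply (rule ethq_sameI)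
  apply (rule ethq_sameI)
  apply (simp only: prod_2k prod_dividef[symmetric] prod.distrib[symmetric])
  apply (rule scal)
  subgoal for x
    using nz p0 bal by (simp add: qpow_facts field_simps )
  done

lemma move_u0u1_Tm:
  assumes nz: "t0 \<noteq> 0" "t1 \<noteq> 0" "t2 \<noteq> 0" "t3 \<noteq> 0" "u0 \<noteq> 0" "u1 \<noteq> 0" "q \<noteq> 0" "z \<noteq> 0"
      and bal: "t0 * t1 * t2 * t3 * u0 * u1 = p * q"
  shows "Tm n z t0 t1 t2 t3 (u0*p) (u1/p) q p k = Tm n z t0 t1 t2 t3 u0 u1 q p k"
  unfolding Tm_def
  apply (rule term_eq)
  apply (rule ethq_divpI; simp add: nz p0)
  apply (rule ethq_divpI; simp add: nz p0)
  apply (rule ethq_divpI; simp add: nz p0)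
  apply (rule ethq_eqI; simp add: nz p0)
  apply (rule ethq_sameI)
  apply (rule ethq_sameI)
  apply (rule ethq_sameI)
  apply (rule ethq_divpI; simp add: nz p0)
  apply (rule ethq_divpI; simp add: nz p0)
  apply (rule ethq_divpI; simp add: nz p0)
  apply (rule ethq_sameI)
  apply (rule ethq_divpI; simp add: nz p0)
  apply (rule ethq_divpI; simp add: nz p0)
  apply (rule ethq_divpI; simp add: nz p0)
  apply (rule ethq_divpI; simp add: nz p0)
  apply (rule ethq_sameI)
  apply (rule ethq_sameI)
  apply (rule ethq_sameI)
  apply (simp only: prod_2k prod_dividef[symmetric] prod.distrib[symmetric])
  apply (rule scal)
  subgoal for x
    using nz p0 bal by (simp add: qpow_facts field_simps )
  done

lemma part3_Tm:
  assumes nz: "t0 \<noteq> 0" "t1 \<noteq> 0" "t2 \<noteq> 0" "t3 \<noteq> 0" "u0 \<noteq> 0" "u1 \<noteq> 0" "q \<noteq> 0" "z \<noteq> 0" "s \<noteq> 0"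
      and bal: "t0 * t1 * t2 * t3 * u0 * u1 = p * q"
      and s2: "s * s = p"
  shows "Tm n (z * s) (t0 * s) (t1 / s) (t2 / s) (t3 / s) (u0 * s) (u1 * s) q p k = Tm n z t0 t1 t2 t3 u0 u1 q p k"
  unfolding Tm_def
  apply (rule term_eq)
  apply (rule ethq_eqI; simp add: nz p0 qpow_facts field_simps flip: s2)
  apply (rule ethq_eqI; simp add: nz p0 qpow_facts field_simps flip: s2)
  apply (rule ethq_eqI; simp add: nz p0 qpow_facts field_simps flip: s2)
  apply (rule ethq_divpI; simp add: nz p0 qpow_facts field_simps flip: s2)
  apply (rule ethq_sameI)
  apply (rule ethq_multI; simp add: nz p0 qpow_facts field_simps flip: s2)
  apply (rule ethq_eqI; simp add: nz p0 qpow_facts field_simps flip: s2)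
  apply (rule ethq_eqI; simp add: nz p0 qpow_facts field_simps flip: s2)
  apply (rule ethq_eqI; simp add: nz p0 qpow_facts field_simps flip: s2)
  apply (rule ethq_eqI; simp add: nz p0 qpow_facts field_simps flip: s2)
  apply (rule ethq_sameI)
  apply (rule ethq_multI; simp add: nz p0 qpow_facts field_simps flip: s2)
  apply (rule ethq_eqI; simp add: nz p0 qpow_facts field_simps flip: s2)
  apply (rule ethq_eqI; simp add: nz p0 qpow_facts field_simps flip: s2)
  apply (rule ethq_divpI; simp add: nz p0 qpow_facts field_simps flip: s2)
  apply (rule ethq_eqI; simp add: nz p0 qpow_facts field_simps flip: s2)
  apply (rule ethq_eqI; simp add: nz p0 qpow_facts field_simps flip: s2)
  apply (rule ethq_eqI; simp add: nz p0 qpow_facts field_simps flip: s2)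
  apply (simp only: prod_2k prod_dividef[symmetric] prod.distrib[symmetric])
  apply (rule scal)
  subgoal for x
    using nz p0 bal by (simp add: qpow_facts field_simps)
  done

lemma part4_Tm:
  assumes nz: "t0 \<noteq> 0" "t1 \<noteq> 0" "t2 \<noteq> 0" "t3 \<noteq> 0" "u0 \<noteq> 0" "u1 \<noteq> 0" "q \<noteq> 0" "z \<noteq> 0"
      and bal: "t0 * t1 * t2 * t3 * u0 * u1 = p * q"
  shows "Tm n z (1 / t0) (1 / t1) (1 / t2) (1 / t3) (p / u0) (p / u1) (1 / q) p k = Tm n z t0 t1 t2 t3 u0 u1 q p k"
  unfolding Tm_def
  apply (rule term_eq_swap)
  apply (rule ethq_invpI; simp add: nz p0 qpow_facts power_one_over field_simps)
  apply (rule ethq_invpI; simp add: nz p0 qpow_facts power_one_over field_simps)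
  apply (rule ethq_invpI; simp add: nz p0 qpow_facts power_one_over field_simps)
  apply (rule ethq_invI; simp add: nz p0 qpow_facts power_one_over field_simps)
  apply (rule ethq_invI; simp add: nz p0 qpow_facts power_one_over field_simps)
  apply (rule ethq_invI; simp add: nz p0 qpow_facts power_one_over field_simps)
  apply (rule ethq_invI; simp add: nz p0 qpow_facts power_one_over field_simps)
  apply (rule ethq_invpI; simp add: nz p0 qpow_facts power_one_over field_simps)
  apply (rule ethq_invpI; simp add: nz p0 qpow_facts power_one_over field_simps)
  apply (rule ethq_invpI; simp add: nz p0 qpow_facts power_one_over field_simps)
  apply (rule ethq_invI; simp add: nz p0 qpow_facts power_one_over field_simps)
  apply (rule ethq_invpI; simp add: nz p0 qpow_facts power_one_over field_simps)
  apply (rule ethq_invpI; simp add: nz p0 qpow_facts power_one_over field_simps)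
  apply (rule ethq_invpI; simp add: nz p0 qpow_facts power_one_over field_simps)
  apply (rule ethq_invpI; simp add: nz p0 qpow_facts power_one_over field_simps)
  apply (rule ethq_invI; simp add: nz p0 qpow_facts power_one_over field_simps)
  apply (rule ethq_invI; simp add: nz p0 qpow_facts power_one_over field_simps)
  apply (rule ethq_invI; simp add: nz p0 qpow_facts power_one_over field_simps)
  apply (simp only: prod_2k prod_dividef[symmetric] prod.distrib[symmetric])
  apply (rule scal)
  subgoal for x
  proof -
    have t3eq: "t3 = p * q / (t0 * t1 * t2 * u0 * u1)" using bal nz by (simp add: field_simps)
    show ?thesis using nz p0 by (simp add: t3eq qpow_facts field_simps)
  qed
  done

end


lemma Tm_sym12: "Tm n z t0 t1 t2 t3 u0 u1 q p k = Tm n z t0 t2 t1 t3 u0 u1 q p k"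
  unfolding Tm_def by (simp add: ac_simps)

lemma Tm_sym13: "Tm n z t0 t1 t2 t3 u0 u1 q p k = Tm n z t0 t3 t2 t1 u0 u1 q p k"
  unfolding Tm_def by (simp add: ac_simps)

lemma int_shift:
  fixes G :: "int \<Rightarrow> 'a"
  assumes "\<And>c. G (c + 1) = G c"
  shows "G c = G 0"
proof (induct c rule: int_induct[where k=0])
  case base then show ?case by simp
next
  case (step1 i) then show ?case using assms[of i] by simp
next
  case (step2 i) then show ?case using assms[of "i - 1"] by simp
qed

context thp begin

definition "nzb t0 t1 t2 t3 u0 u1 q \<longleftrightarrow> t0 \<noteq> 0 \<and> t1 \<noteq> 0 \<and> t2 \<noteq> 0 \<and> t3 \<noteq> 0 \<and> u0 \<noteq> 0 \<and> u1 \<noteq> 0 \<and> q \<noteq> 0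
   \<and> t0 * t1 * t2 * t3 * u0 * u1 = p * q"

lemma M1: "nzb t0 t1 t2 t3 u0 u1 q \<Longrightarrow> z \<noteq> 0 \<Longrightarrow>
   Rt n z (t0*p) (t1/p) t2 t3 u0 u1 q p = Rt n z t0 t1 t2 t3 u0 u1 q p"
  unfolding Rt_Tm nzb_def by (intro sum.cong refl move_t0t1_Tm) auto

lemma M2: "nzb t0 t1 t2 t3 u0 u1 q \<Longrightarrow> z \<noteq> 0 \<Longrightarrow>
   Rt n z (t0*p) t1 (t2/p) t3 u0 u1 q p = Rt n z t0 t1 t2 t3 u0 u1 q p"
  unfolding Rt_Tm nzb_def
  apply (intro sum.cong refl)
  apply (subst (1 2) Tm_sym12)
  apply (rule move_t0t1_Tm)
  apply (auto simp: ac_simps)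
  done

lemma M3: "nzb t0 t1 t2 t3 u0 u1 q \<Longrightarrow> z \<noteq> 0 \<Longrightarrow>
   Rt n z (t0*p) t1 t2 (t3/p) u0 u1 q p = Rt n z t0 t1 t2 t3 u0 u1 q p"
  unfolding Rt_Tm nzb_def
  apply (intro sum.cong refl)
  apply (subst (1 2) Tm_sym13)
  apply (rule move_t0t1_Tm)
  apply (auto simp: ac_simps)
  done

lemma M4: "nzb t0 t1 t2 t3 u0 u1 q \<Longrightarrow> z \<noteq> 0 \<Longrightarrow>
   Rt n z t0 (t1/p) t2 t3 u0 (u1*p) q p = Rt n z t0 t1 t2 t3 u0 u1 q p"
  unfolding Rt_Tm nzb_def by (intro sum.cong refl move_u1t1_Tm) auto

lemma M5: "nzb t0 t1 t2 t3 u0 u1 q \<Longrightarrow> z \<noteq> 0 \<Longrightarrow>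
   Rt n z t0 t1 t2 t3 (u0*p) (u1/p) q p = Rt n z t0 t1 t2 t3 u0 u1 q p"
  unfolding Rt_Tm nzb_def by (intro sum.cong refl move_u0u1_Tm) auto

definition "RS n z t0 t1 t2 t3 u0 u1 q a0 a1 a2 a3 b0 b1 =
  Rt n z (t0 * p powi a0) (t1 * p powi a1) (t2 * p powi a2) (t3 * p powi a3) (u0 * p powi b0) (u1 * p powi b1) q p"

lemma nzb_shift:
  assumes "nzb t0 t1 t2 t3 u0 u1 q" "a0 + a1 + a2 + a3 + b0 + b1 = 0"
  shows "nzb (t0 * p powi a0) (t1 * p powi a1) (t2 * p powi a2) (t3 * p powi a3) (u0 * p powi b0) (u1 * p powi b1) q"
proof -
  have "(t0 * p powi a0) * (t1 * p powi a1) * (t2 * p powi a2) * (t3 * p powi a3) * (u0 * p powi b0) * (u1 * p powi b1)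
      = (t0 * t1 * t2 * t3 * u0 * u1) * p powi (a0 + a1 + a2 + a3 + b0 + b1)"
    using p0 by (simp add: power_int_add ac_simps)
  thus ?thesis using assms p0 unfolding nzb_def by simp
qed

lemma pp1: "p powi (c + 1) = p powi c * p" "p powi (c - 1) = p powi c / p"
  using p0 by (simp_all add: power_int_add power_int_diff)

lemma shift_all:
  assumes nzb: "nzb t0 t1 t2 t3 u0 u1 q" and z: "z \<noteq> 0"
      and sum0: "a0 + a1 + a2 + a3 + b0 + b1 = 0"
  shows "RS n z t0 t1 t2 t3 u0 u1 q a0 a1 a2 a3 b0 b1 = Rt n z t0 t1 t2 t3 u0 u1 q p"
proof -
  let ?R = "RS n z t0 t1 t2 t3 u0 u1 q"
  have S5: "?R a0 a1 a2 a3 (c+1) (d - c - 1) = ?R a0 a1 a2 a3 c (d - c)"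
    if "a0 + a1 + a2 + a3 + d = 0" for a0 a1 a2 a3 c d
  proof -
    have "?R a0 a1 a2 a3 (c+1) (d - c - 1) =
      Rt n z (t0 * p powi a0) (t1 * p powi a1) (t2 * p powi a2) (t3 * p powi a3) ((u0 * p powi c) * p) ((u1 * p powi (d - c)) / p) q p"
    proof -
      have e1: "u0 * p powi (c+1) = (u0 * p powi c) * p" and e2: "u1 * p powi (d - c - 1) = (u1 * p powi (d - c)) / p"
        by (simp_all add: pp1)
      show ?thesis unfolding RS_def e1 e2 ..
    qed
    also have "\<dots> = ?R a0 a1 a2 a3 c (d - c)" unfolding RS_def
      by (rule M5[OF nzb_shift[OF nzb] z]) (use that in simp)
    finally show ?thesis .
  qed
  have S4: "?R a0 (e - c - 1) a2 a3 0 (c + 1) = ?R a0 (e - c) a2 a3 0 c"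
    if "a0 + e + a2 + a3 = 0" for a0 a2 a3 c e
  proof -
    have "?R a0 (e - c - 1) a2 a3 0 (c + 1) =
      Rt n z (t0 * p powi a0) ((t1 * p powi (e - c)) / p) (t2 * p powi a2) (t3 * p powi a3) (u0 * p powi 0) ((u1 * p powi c) * p) q p"
    proof -
      have e1: "u1 * p powi (c+1) = (u1 * p powi c) * p" and e2: "t1 * p powi (e - c - 1) = (t1 * p powi (e - c)) / p"
        by (simp_all add: pp1)
      show ?thesis unfolding RS_def e1 e2 ..
    qed
    also have "\<dots> = ?R a0 (e - c) a2 a3 0 c" unfolding RS_def
      by (rule M4[OF nzb_shift[OF nzb] z]) (use that in simp)
    finally show ?thesis .
  qed
  have S1: "?R (e - c - 1) (c + 1) a2 a3 0 0 = ?R (e - c) c a2 a3 0 0"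
    if "e + a2 + a3 = 0" for a2 a3 c e
  proof -
    have "?R (e - c) c a2 a3 0 0 =
      Rt n z ((t0 * p powi (e - c - 1)) * p) ((t1 * p powi (c + 1)) / p) (t2 * p powi a2) (t3 * p powi a3) (u0 * p powi 0) (u1 * p powi 0) q p"
    proof -
      have e1: "t0 * p powi (e - c) = (t0 * p powi (e - c - 1)) * p" and e2: "t1 * p powi c = (t1 * p powi (c + 1)) / p"
        using p0 by (simp_all add: pp1)
      show ?thesis unfolding RS_def e1 e2 ..
    qed
    also have "\<dots> = ?R (e - c - 1) (c + 1) a2 a3 0 0" unfolding RS_def
      by (rule M1[OF nzb_shift[OF nzb] z]) (use that in simp)
    finally show ?thesis by simp
  qed
  have S2: "?R (e - c - 1) 0 (c + 1) a3 0 0 = ?R (e - c) 0 c a3 0 0"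
    if "e + a3 = 0" for a3 c e
  proof -
    have "?R (e - c) 0 c a3 0 0 =
      Rt n z ((t0 * p powi (e - c - 1)) * p) (t1 * p powi 0) ((t2 * p powi (c + 1)) / p) (t3 * p powi a3) (u0 * p powi 0) (u1 * p powi 0) q p"
    proof -
      have e1: "t0 * p powi (e - c) = (t0 * p powi (e - c - 1)) * p" and e2: "t2 * p powi c = (t2 * p powi (c + 1)) / p"
        using p0 by (simp_all add: pp1)
      show ?thesis unfolding RS_def e1 e2 ..
    qed
    also have "\<dots> = ?R (e - c - 1) 0 (c + 1) a3 0 0" unfolding RS_def
      by (rule M2[OF nzb_shift[OF nzb] z]) (use that in simp)
    finally show ?thesis by simp
  qed
  have S3: "?R (e - c - 1) 0 0 (c + 1) 0 0 = ?R (e - c) 0 0 c 0 0"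
    if "e = 0" for c e
  proof -
    have "?R (e - c) 0 0 c 0 0 =
      Rt n z ((t0 * p powi (e - c - 1)) * p) (t1 * p powi 0) (t2 * p powi 0) ((t3 * p powi (c + 1)) / p) (u0 * p powi 0) (u1 * p powi 0) q p"
    proof -
      have e1: "t0 * p powi (e - c) = (t0 * p powi (e - c - 1)) * p" and e2: "t3 * p powi c = (t3 * p powi (c + 1)) / p"
        using p0 by (simp_all add: pp1)
      show ?thesis unfolding RS_def e1 e2 ..
    qed
    also have "\<dots> = ?R (e - c - 1) 0 0 (c + 1) 0 0" unfolding RS_def
      by (rule M3[OF nzb_shift[OF nzb] z]) (use that in simp)
    finally show ?thesis by simp
  qed
  define d where "d = b0 + b1"
  have "?R a0 a1 a2 a3 b0 b1 = ?R a0 a1 a2 a3 b0 (d - b0)" by (simp add: d_def)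
  also have "\<dots> = ?R a0 a1 a2 a3 0 (d - 0)"
    using int_shift[where G = "\<lambda>c. ?R a0 a1 a2 a3 c (d - c)" and c = b0] S5[of a0 a1 a2 a3 d] sum0
    by (simp add: d_def algebra_simps)
  also have "\<dots> = ?R a0 (a1 + d - 0) a2 a3 0 0"
    using int_shift[where G = "\<lambda>c. ?R a0 (a1 + d - c) a2 a3 0 c" and c = d] S4[of a0 "a1 + d" a2 a3] sum0
    by (simp add: d_def algebra_simps)
  also have "\<dots> = ?R (a0 + a1 + d - 0) 0 a2 a3 0 0"
    using int_shift[where G = "\<lambda>c. ?R (a0 + a1 + d - c) c a2 a3 0 0" and c = "a1 + d"] S1[of "a0 + a1 + d" a2 a3] sum0
    by (simp add: d_def algebra_simps)
  also have "\<dots> = ?R (a0 + a1 + d + a2 - 0) 0 0 a3 0 0"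
    using int_shift[where G = "\<lambda>c. ?R (a0 + a1 + d + a2 - c) 0 c a3 0 0" and c = "a2"] S2[of "a0 + a1 + d + a2" a3] sum0
    by (simp add: d_def algebra_simps)
  also have "\<dots> = ?R (a0 + a1 + d + a2 + a3 - 0) 0 0 0 0 0"
    using int_shift[where G = "\<lambda>c. ?R (a0 + a1 + d + a2 + a3 - c) 0 0 c 0 0" and c = "a3"] S3[of "a0 + a1 + d + a2 + a3"] sum0
    by (simp add: d_def algebra_simps)
  also have "\<dots> = Rt n z t0 t1 t2 t3 u0 u1 q p"
    using sum0 by (simp add: RS_def d_def algebra_simps)
  finally show ?thesis .
qed

end


lemma Tm_inv_z: assumes "z \<noteq> 0"
  shows "Tm n (1/z) t0 t1 t2 t3 u0 u1 q p k = Tm n z t0 t1 t2 t3 u0 u1 q p k"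
  unfolding Tm_def by (simp add: ac_simps)

context thp begin

lemma Tm_pz:
  assumes nz: "t0 \<noteq> 0" "u0 \<noteq> 0" "q \<noteq> 0" "z \<noteq> 0"
  shows "Tm n (p*z) t0 t1 t2 t3 u0 u1 q p k = Tm n z t0 t1 t2 t3 u0 u1 q p k"
  unfolding Tm_def
  apply (rule term_eq)
  apply (rule ethq_sameI)
  apply (rule ethq_sameI)
  apply (rule ethq_sameI)
  apply (rule ethq_sameI)
  apply (rule ethq_sameI)
  apply (rule ethq_multI; simp add: nz p0)
  apply (rule ethq_divpI; simp add: nz p0)
  apply (rule ethq_sameI)
  apply (rule ethq_sameI)
  apply (rule ethq_sameI)
  apply (rule ethq_sameI)
  apply (rule ethq_sameI)
  apply (rule ethq_sameI)
  apply (rule ethq_multI; simp add: nz p0)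
  apply (rule ethq_divpI; simp add: nz p0)
  apply (rule ethq_sameI)
  apply (rule ethq_sameI)
  apply (rule ethq_sameI)
  apply (simp only: prod_2k prod_dividef[symmetric] prod.distrib[symmetric])
  apply (rule scal)
  subgoal for x
    using nz p0 by (simp add: field_simps)
  done

lemma theta_comp_hol:
  assumes "h holomorphic_on A" "\<And>z. z \<in> A \<Longrightarrow> h z \<noteq> 0"
  shows "(\<lambda>z. theta (h z) p) holomorphic_on A"
proof -
  have "((\<lambda>x. theta x p) \<circ> h) holomorphic_on A"
    by (rule holomorphic_on_compose_gen[OF assms(1) theta_holomorphic[OF p1]]) (use assms(2) in auto)
  thus ?thesis by (simp add: o_def)
qed

lemma ethq_hol:
  assumes "h holomorphic_on A" "\<And>z. z \<in> A \<Longrightarrow> h z \<noteq> 0" "q \<noteq> 0"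
  shows "(\<lambda>z. ethq (h z) q p k) holomorphic_on A"
  unfolding ethq_def
  by (intro holomorphic_on_prod theta_comp_hol holomorphic_intros assms) (use assms in auto)

lemma ethq_mero:
  assumes "h holomorphic_on (-{0})" "\<And>z. z \<noteq> 0 \<Longrightarrow> h z \<noteq> 0" "q \<noteq> 0"
  shows "(\<lambda>z. ethq (h z) q p k) meromorphic_on (-{0})"
  by (rule analytic_on_imp_meromorphic_on, subst analytic_on_open) (auto intro!: ethq_hol assms)

lemma Rt_mero:
  assumes nz: "t0 \<noteq> 0" "u0 \<noteq> 0" "q \<noteq> 0"
  shows "(\<lambda>z. Rt n z t0 t1 t2 t3 u0 u1 q p) meromorphic_on (-{0})"
  unfolding Rt_Tm Tm_def
  by (intro meromorphic_intros ethq_mero holomorphic_intros) (auto simp: nz)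

definition "Kc n t0 t1 t2 t3 u0 u1 q k =
   ethq (q * t0 / u0) q p (2 * k) / ethq (t0 / u0) q p (2 * k) *
   ((ethq (t0 / u0) q p k * ethq (p * q ^ n / (u0 * u1)) q p k * ethq (q powi (- int n)) q p k
     * ethq (q / (u0 * t1)) q p k * ethq (q / (u0 * t2)) q p k * ethq (q / (u0 * t3)) q p k)
   / (ethq q q p k * ethq (q powi (1 - int n) * t0 * u1 / p) q p k * ethq (q ^ (n + 1) * t0 / u0) q p k
     * ethq (t0 * t1) q p k * ethq (t0 * t2) q p k * ethq (t0 * t3) q p k)) * q ^ k"

lemma TmK: "Tm n z t0 t1 t2 t3 u0 u1 q p k = Kc n t0 t1 t2 t3 u0 u1 q k *
   ((ethq (t0 * z) q p k * ethq (t0 / z) q p k) / (ethq (q / u0 * z) q p k * ethq (q / u0 / z) q p k))"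
  unfolding Tm_def Kc_def by (simp add: divide_inverse inverse_mult_distrib ac_simps)

definition "Cn u0 q n = (\<Prod>j<n. u0^2 / (q^2 * (q^j)^2))"

lemma E_eq:
  assumes "z \<noteq> 0" "u0 \<noteq> 0" "q \<noteq> 0"
  shows "ethq (p*q*z/u0) q p n * ethq (p*q/(z*u0)) q p n = Cn u0 q n * (ethq (q/u0*z) q p n * ethq (q/u0/z) q p n)"
proof -
  have "ethq (p*q*z/u0) q p n = (\<Prod>j<n. -1 / ((q/u0*z) * q^j)) * ethq (q/u0*z) q p n"
    by (rule ethq_multI) (use assms in auto)
  moreover have "ethq (p*q/(z*u0)) q p n = (\<Prod>j<n. -1 / ((q/u0/z) * q^j)) * ethq (q/u0/z) q p n"
    by (rule ethq_multI) (use assms in auto)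
  moreover have "(\<Prod>j<n. -1 / ((q/u0*z) * q^j)) * (\<Prod>j<n. -1 / ((q/u0/z) * q^j)) = Cn u0 q n"
    unfolding Cn_def prod.distrib[symmetric] by (intro prod.cong refl) (use assms in \<open>simp add: field_simps power2_eq_square\<close>)
  ultimately show ?thesis by (simp add: ac_simps)
qed

lemma ethq_split: "k \<le> n \<Longrightarrow> ethq x q p n = ethq x q p k * (\<Prod>j\<in>{k..<n}. theta (x*q^j) p)"
  unfolding ethq_def lessThan_atLeast0 by (simp add: prod.atLeastLessThan_concat)

definition "gfun n t0 t1 t2 t3 u0 u1 q z = (\<Sum>k=0..n. Kc n t0 t1 t2 t3 u0 u1 q k *
   (ethq (t0 * z) q p k * ethq (t0 / z) q p k) * Cn u0 q n *
   (\<Prod>j\<in>{k..<n}. theta (q/u0*z*q^j) p * theta (q/u0/z*q^j) p))"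

lemma gfun_hol:
  assumes "t0 \<noteq> 0" "u0 \<noteq> 0" "q \<noteq> 0"
  shows "gfun n t0 t1 t2 t3 u0 u1 q holomorphic_on (-{0})"
  unfolding gfun_def
  by (intro holomorphic_intros ethq_hol theta_comp_hol) (auto simp: assms)

lemma gfun_eq:
  assumes nz: "t0 \<noteq> 0" "u0 \<noteq> 0" "q \<noteq> 0" "z \<noteq> 0"
    and E: "ethq (p*q*z/u0) q p n * ethq (p*q/(z*u0)) q p n \<noteq> 0"
  shows "gfun n t0 t1 t2 t3 u0 u1 q z = ethq (p*q*z/u0) q p n * ethq (p*q/(z*u0)) q p n * Rt n z t0 t1 t2 t3 u0 u1 q p"
proof -
  let ?E = "ethq (p*q*z/u0) q p n * ethq (p*q/(z*u0)) q p n"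
  have Eeq: "?E = Cn u0 q n * (ethq (q/u0*z) q p n * ethq (q/u0/z) q p n)" by (rule E_eq) (use nz in auto)
  have "?E * Tm n z t0 t1 t2 t3 u0 u1 q p k = Kc n t0 t1 t2 t3 u0 u1 q k *
     (ethq (t0 * z) q p k * ethq (t0 / z) q p k) * Cn u0 q n *
     (\<Prod>j\<in>{k..<n}. theta (q/u0*z*q^j) p * theta (q/u0/z*q^j) p)" if k: "k \<in> {0..n}" for k
  proof -
    have kn: "k \<le> n" using k by auto
    define Rw where "Rw = (\<Prod>j\<in>{k..<n}. theta (q/u0*z*q^j) p)"
    define Rv where "Rv = (\<Prod>j\<in>{k..<n}. theta (q/u0/z*q^j) p)"
    have sw: "ethq (q/u0*z) q p n = ethq (q/u0*z) q p k * Rw" unfolding Rw_def by (rule ethq_split[OF kn])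
    have sv: "ethq (q/u0/z) q p n = ethq (q/u0/z) q p k * Rv" unfolding Rv_def by (rule ethq_split[OF kn])
    have E2: "?E = Cn u0 q n * ((ethq (q/u0*z) q p k * Rw) * (ethq (q/u0/z) q p k * Rv))"
      using Eeq sw sv by simp
    have nzw: "ethq (q/u0*z) q p k \<noteq> 0" "ethq (q/u0/z) q p k \<noteq> 0" using E E2 by auto
    have RR: "(\<Prod>j\<in>{k..<n}. theta (q/u0*z*q^j) p * theta (q/u0/z*q^j) p) = Rw * Rv"
      unfolding Rw_def Rv_def by (rule prod.distrib)
    show ?thesis unfolding TmK RR E2 using nzw by (simp add: field_simps)
  qed
  hence "?E * Rt n z t0 t1 t2 t3 u0 u1 q p = gfun n t0 t1 t2 t3 u0 u1 q z"
    unfolding Rt_Tm gfun_def sum_distrib_left by (intro sum.cong refl) auto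
  thus ?thesis by simp
qed

end


theorem lemma3p2:
  fixes p q t0 t1 t2 t3 u0 u1 :: complex and n :: nat
  assumes "0 < norm p" and "norm p < 1"
    and "t0 * t1 * t2 * t3 * u0 * u1 = p * q"
    and "generic_params n t0 t1 t2 t3 u0 u1 q p"
  shows "A_space u0 p q (\<lambda>z. Rt n z t0 t1 t2 t3 u0 u1 q p)
    \<and> (\<forall>k0 k1 k2 k3 l0 l1 :: int. k0 + k1 + k2 + k3 + l0 + l1 = 0 \<longrightarrow>
         (\<forall>z. regular_pt n z u0 q p \<longrightarrow>
            Rt n z (t0 * p powi k0) (t1 * p powi k1) (t2 * p powi k2) (t3 * p powi k3)
                   (u0 * p powi l0) (u1 * p powi l1) q p
            = Rt n z t0 t1 t2 t3 u0 u1 q p))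
    \<and> (\<forall>s z. s\<^sup>2 = p \<longrightarrow> regular_pt n z u0 q p \<longrightarrow>
            Rt n (z * s) (t0 * s) (t1 / s) (t2 / s) (t3 / s) (u0 * s) (u1 * s) q p
            = Rt n z t0 t1 t2 t3 u0 u1 q p)
    \<and> (\<forall>z. regular_pt n z u0 q p \<longrightarrow>
            Rt n z (1 / t0) (1 / t1) (1 / t2) (1 / t3) (p / u0) (p / u1) (1 / q) p
            = Rt n z t0 t1 t2 t3 u0 u1 q p)"
proof -
  have p0: "p \<noteq> 0" using assms(1) by auto
  interpret thp p using assms(2) p0 by unfold_locales
  have nz: "t0 \<noteq> 0" "t1 \<noteq> 0" "t2 \<noteq> 0" "t3 \<noteq> 0" "u0 \<noteq> 0" "u1 \<noteq> 0" "q \<noteq> 0"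
    using assms(4) unfolding generic_params_def by auto
  note bal = assms(3)
  have nzb: "nzb t0 t1 t2 t3 u0 u1 q" unfolding nzb_def using nz bal by auto
  have P1: "A_space u0 p q (\<lambda>z. Rt n z t0 t1 t2 t3 u0 u1 q p)"
    unfolding A_space_def
  proof (intro conjI allI impI)
    show "(\<lambda>z. Rt n z t0 t1 t2 t3 u0 u1 q p) meromorphic_on (- {0})"
      by (rule Rt_mero) (use nz in auto)
  next
    fix z :: complex assume z: "z \<noteq> 0"
    show "Rt n z t0 t1 t2 t3 u0 u1 q p = Rt n (1 / z) t0 t1 t2 t3 u0 u1 q p"
      unfolding Rt_Tm using Tm_inv_z[OF z] by simp
  next
    fix z :: complex assume z: "z \<noteq> 0"
    show "Rt n (p * z) t0 t1 t2 t3 u0 u1 q p = Rt n z t0 t1 t2 t3 u0 u1 q p"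
      unfolding Rt_Tm using Tm_pz[of t0 u0 q z] nz z by simp
  next
    show "\<exists>m g. g holomorphic_on - {0} \<and>
          (\<forall>z. z \<noteq> 0 \<longrightarrow> ethq (p * q * z / u0) q p m * ethq (p * q / (z * u0)) q p m \<noteq> 0 \<longrightarrow>
             g z = ethq (p * q * z / u0) q p m * ethq (p * q / (z * u0)) q p m * Rt n z t0 t1 t2 t3 u0 u1 q p)"
      using gfun_hol[of t0 u0 q n t1 t2 t3 u1] gfun_eq[of t0 u0 q _ n t1 t2 t3 u1] nz
      by (intro exI[of _ n] exI[of _ "gfun n t0 t1 t2 t3 u0 u1 q"]) auto
  qed
  have P2: "\<forall>k0 k1 k2 k3 l0 l1 :: int. k0 + k1 + k2 + k3 + l0 + l1 = 0 \<longrightarrow>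
         (\<forall>z. regular_pt n z u0 q p \<longrightarrow>
            Rt n z (t0 * p powi k0) (t1 * p powi k1) (t2 * p powi k2) (t3 * p powi k3)
                   (u0 * p powi l0) (u1 * p powi l1) q p
            = Rt n z t0 t1 t2 t3 u0 u1 q p)"
  proof (intro allI impI)
    fix k0 k1 k2 k3 l0 l1 :: int and z
    assume s: "k0 + k1 + k2 + k3 + l0 + l1 = 0" and r: "regular_pt n z u0 q p"
    have z: "z \<noteq> 0" using r unfolding regular_pt_def by auto
    show "Rt n z (t0 * p powi k0) (t1 * p powi k1) (t2 * p powi k2) (t3 * p powi k3)
                   (u0 * p powi l0) (u1 * p powi l1) q p = Rt n z t0 t1 t2 t3 u0 u1 q p"
      using shift_all[OF nzb z s, of n] unfolding RS_def .
  qed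
  have P3: "\<forall>s z. s\<^sup>2 = p \<longrightarrow> regular_pt n z u0 q p \<longrightarrow>
            Rt n (z * s) (t0 * s) (t1 / s) (t2 / s) (t3 / s) (u0 * s) (u1 * s) q p
            = Rt n z t0 t1 t2 t3 u0 u1 q p"
  proof (intro allI impI)
    fix s z :: complex assume s: "s\<^sup>2 = p" and r: "regular_pt n z u0 q p"
    have z: "z \<noteq> 0" using r unfolding regular_pt_def by auto
    have ss: "s * s = p" using s by (simp add: power2_eq_square)
    have s0: "s \<noteq> 0" using ss p0 by auto
    show "Rt n (z * s) (t0 * s) (t1 / s) (t2 / s) (t3 / s) (u0 * s) (u1 * s) q p = Rt n z t0 t1 t2 t3 u0 u1 q p"
      unfolding Rt_Tm by (intro sum.cong refl part3_Tm) (use nz z s0 bal ss in auto)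
  qed
  have P4: "\<forall>z. regular_pt n z u0 q p \<longrightarrow>
            Rt n z (1 / t0) (1 / t1) (1 / t2) (1 / t3) (p / u0) (p / u1) (1 / q) p
            = Rt n z t0 t1 t2 t3 u0 u1 q p"
  proof (intro allI impI)
    fix z :: complex assume r: "regular_pt n z u0 q p"
    have z: "z \<noteq> 0" using r unfolding regular_pt_def by auto
    show "Rt n z (1 / t0) (1 / t1) (1 / t2) (1 / t3) (p / u0) (p / u1) (1 / q) p = Rt n z t0 t1 t2 t3 u0 u1 q p"
      unfolding Rt_Tm by (intro sum.cong refl part4_Tm) (use nz z bal in auto)
  qed
  show ?thesis using P1 P2 P3 P4 by blast
qed

end
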